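(* In the setting of OGP (with $\eta>0$, $\widetilde x_1\in C$, arbitrary predictions $\widehat x_t^*\in H$, and updates $\widetilde{x}_{t+1}=P_C(\widetilde{x}_t-\eta x_t^* )$, $x_t^*\in\partial\varphi_t(x_t)$, $x_{t+1}=P_C(\widetilde{x}_{t+1}-\eta\widehat{x}_{t+1}^* )$), for every $T\ge1$ and every $z_1,\dots,z_T\in C$, $$\sum_{t=1}^T\varphi_t(x_t)-\sum_{t=1}^T\varphi_t(z_t)\le \frac{\rho^2}{2\eta}+\frac{\rho}{\eta}\sum_{t=2}^T\|z_t-z_{t-1}\|+\frac{\eta}{2}\sum_{t=1}^T h_{\|x_t^*\|}\big(\|x_t^*-\widehat{x}_t^*\|\big),$$ where $h_\sigma(\delta)=\delta^2-(|\delta|-|\sigma|)_+^2$ and $(a)_+=\max\{a,0\}$.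
   Context: $H$ is a real Hilbert space; $C\subset H$ is nonempty, closed, convex with diameter $\rho=\sup_{x,y\in C}\|x-y\|<\infty$; $P_C$ is the metric projection onto $C$; each $\varphi_t$ is convex with $C\subset\operatorname{dom}\partial\varphi_t$, and $\partial$ is the subdifferential. *)

theory Defs
  imports "HOL-Analysis.Analysis"
begin

text \<open>Metric projection onto a set S in a real inner product space (for S nonempty,
closed, convex in a Hilbert space the nearest point exists and is unique).\<close>
definition metric_proj :: "'a::real_inner set \<Rightarrow> 'a \<Rightarrow> 'a" where
  "metric_proj S a = (SOME x. x \<in> S \<and> (\<forall>y\<in>S. dist a x \<le> dist a y))"

text \<open>Subdifferential of the extended-valued convex function equal to f on its
effective domain D and +infinity outside D.\<close>
definition subdiff :: "'a::real_inner set \<Rightarrow> ('a \<Rightarrow> real) \<Rightarrow> 'a \<Rightarrow> 'a set" where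
  "subdiff D f x = {s. x \<in> D \<and> (\<forall>y\<in>D. f x + inner s (y - x) \<le> f y)}"

definition pos_part :: "real \<Rightarrow> real" where
  "pos_part a = max a 0"

definition hfun :: "real \<Rightarrow> real \<Rightarrow> real" where
  "hfun \<sigma> \<delta> = \<delta>^2 - (pos_part (\<bar>\<delta>\<bar> - \<bar>\<sigma>\<bar>))^2"

end

theory Submission
  imports Defs
begin


lemma key_k:
  fixes G M a b :: "'a::real_inner"
  assumes I4: "inner (b - M) a \<ge> 0" and k: "0 < k" "k \<le> 1"
  shows "2 * inner G a - (norm (a + b))^2 \<le> k * (norm (G - M))^2 + (1/k - 1) * (norm G)^2"
proof -
  have n1: "(norm (M - G + a))^2 = inner M M + inner G G + inner a a - 2 * inner G M + 2 * inner M a - 2 * inner G a"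
    by (simp add: power2_norm_eq_inner inner_simps inner_commute)
  have n2: "(norm (G - k *\<^sub>R a))^2 = inner G G - 2 * k * inner G a + k^2 * inner a a"
    unfolding power2_norm_eq_inner by (simp add: inner_simps inner_commute power2_eq_square)
  have n3: "(norm ((1-k) *\<^sub>R a + b))^2 = (1-k)^2 * inner a a + 2 * (1-k) * inner a b + inner b b"
    unfolding power2_norm_eq_inner by (simp add: inner_simps inner_commute power2_eq_square algebra_simps)
  have n4: "(norm (G - M))^2 = inner G G - 2 * inner G M + inner M M"
    by (simp add: power2_norm_eq_inner inner_simps inner_commute)
  have n5: "(norm (a + b))^2 = inner a a + 2 * inner a b + inner b b"
    by (simp add: power2_norm_eq_inner inner_simps inner_commute)
  have n6: "(norm G)^2 = inner G G" by (simp add: power2_norm_eq_inner)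
  have n7: "inner (b - M) a = inner a b - inner M a" by (simp add: inner_simps inner_commute)
  have id: "k * (k * (norm (G - M))^2 + (1/k - 1) * (norm G)^2 - (2 * inner G a - (norm (a + b))^2))
     = k * k * (norm (M - G + a))^2 + (1-k) * (norm (G - k *\<^sub>R a))^2 + k * (norm ((1-k) *\<^sub>R a + b))^2
       + 2 * k * k * inner (b - M) a"
    unfolding n1 n2 n3 n4 n5 n6 n7 using k by (simp add: field_simps power2_eq_square)
  have "0 \<le> k * k * (norm (M - G + a))^2 + (1-k) * (norm (G - k *\<^sub>R a))^2 + k * (norm ((1-k) *\<^sub>R a + b))^2
       + 2 * k * k * inner (b - M) a"
    using k I4 by (intro add_nonneg_nonneg mult_nonneg_nonneg) auto
  with id have "0 \<le> k * (k * (norm (G - M))^2 + (1/k - 1) * (norm G)^2 - (2 * inner G a - (norm (a + b))^2))" by linarith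
  with k show ?thesis by (simp add: zero_le_mult_iff)
qed



lemma proj_exists:
  fixes C :: "'a::{real_inner,complete_space} set"
  assumes cl: "closed C" and cv: "convex C" and ne: "C \<noteq> {}"
  shows "\<exists>p\<in>C. \<forall>y\<in>C. dist u p \<le> dist u y"
proof -
  define d where "d = infdist u C"
  have dle: "\<And>y. y \<in> C \<Longrightarrow> d \<le> dist u y" unfolding d_def by (rule infdist_le)
  have d0: "0 \<le> d" unfolding d_def by (rule infdist_nonneg)
  have "\<forall>n. \<exists>x\<in>C. dist u x < d + 1 / real (Suc n)"
  proof
    fix n
    have "(INF a\<in>C. dist u a) < d + 1 / real (Suc n)"
      using ne by (simp add: d_def infdist_notempty)
    then show "\<exists>x\<in>C. dist u x < d + 1 / real (Suc n)"
      using ne by (subst (asm) cINF_less_iff) auto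
  qed
  then obtain x where xC: "\<And>n. x n \<in> C" and xd: "\<And>n. dist u (x n) < d + 1 / real (Suc n)"
    by metis
  have sq: "(dist u (x n))^2 \<le> d^2 + (2*d+1) / real (Suc n)" for n
  proof -
    have "0 \<le> dist u (x n)" by simp
    have e: "1 / real (Suc n) \<le> 1" by simp
    have "(dist u (x n))^2 \<le> (d + 1 / real (Suc n))^2"
      using xd[of n] by (intro power_mono) auto
    also have "\<dots> = d^2 + (2*d) / real (Suc n) + (1 / real (Suc n)) * (1 / real (Suc n))"
      by (simp only: power2_sum power2_eq_square) (simp add: algebra_simps)
    also have "\<dots> \<le> d^2 + (2*d) / real (Suc n) + 1 / real (Suc n)"
      using e by (intro add_left_mono mult_left_le_one_le) auto
    also have "\<dots> = d^2 + (2*d+1) / real (Suc n)" by (simp only: add_divide_distrib add.assoc)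
    finally show ?thesis .
  qed
  have par: "(dist (x m) (x n))^2 \<le> 2 * (dist u (x m))^2 + 2 * (dist u (x n))^2 - 4 * d^2" for m n
  proof -
    define p where "p = x m - u"
    define q where "q = x n - u"
    have mid: "(1/2) *\<^sub>R x m + (1/2) *\<^sub>R x n \<in> C"
      using convexD_alt[OF cv xC[of m] xC[of n], of "1/2"] by simp
    have "d \<le> dist u ((1/2) *\<^sub>R x m + (1/2) *\<^sub>R x n)" using dle[OF mid] .
    also have "dist u ((1/2) *\<^sub>R x m + (1/2) *\<^sub>R x n) = norm (p + q) / 2"
    proof -
      have "u - ((1/2) *\<^sub>R x m + (1/2) *\<^sub>R x n) = - ((1/2) *\<^sub>R (p + q))"
        unfolding p_def q_def by (simp add: algebra_simps) (simp flip: scaleR_add_left)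
      then show ?thesis by (simp add: dist_norm)
    qed
    finally have "2 * d \<le> norm (p + q)" by simp
    then have "(2 * d)^2 \<le> (norm (p + q))^2"
      using d0 by (intro power_mono) auto
    then have h1: "4 * d^2 \<le> (norm (p + q))^2" by (simp add: power_mult_distrib)
    have h2: "(norm (p - q))^2 + (norm (p + q))^2 = 2 * (norm p)^2 + 2 * (norm q)^2"
      unfolding power2_norm_eq_inner by (simp add: inner_simps inner_commute)
    have "dist (x m) (x n) = norm (p - q)" unfolding p_def q_def by (simp add: dist_norm)
    moreover have "dist u (x m) = norm p" "dist u (x n) = norm q"
      unfolding p_def q_def by (simp_all add: dist_norm norm_minus_commute)
    ultimately show ?thesis using h1 h2 by simp
  qed
  have gen: "pp \<le> 2*(dd+aa) + 2*(dd+bb) - 4*dd"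
    if "pp \<le> 2*xx + 2*yy - 4*dd" "xx \<le> dd + aa" "yy \<le> dd + bb" for pp xx yy aa bb dd :: real
    using that by (simp add: algebra_simps)
  have "Cauchy x"
  proof (rule metric_CauchyI)
    fix e :: real assume e: "0 < e"
    obtain N where N: "4 * (2*d+1) / e^2 < real N" using reals_Archimedean2 by blast
    define r where "r = real (Suc N)"
    have Npos: "0 < r" unfolding r_def by simp
    have rN: "real N \<le> r" unfolding r_def by simp
    have NN: "4 * ((2*d+1) / r) < e^2"
    proof -
      have e2: "0 < e^2" using e by simp
      have "4 * (2*d+1) < e^2 * real N" using N e2 by (simp add: divide_less_eq mult.commute)
      also have "\<dots> \<le> e^2 * r" using e2 rN by (simp add: mult_left_mono)
      finally have "4 * (2*d+1) < e^2 * r" .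
      then show ?thesis using Npos by (simp add: divide_less_eq mult.commute)
    qed
    show "\<exists>M. \<forall>m\<ge>M. \<forall>n\<ge>M. dist (x m) (x n) < e"
    proof (intro exI allI impI)
      fix m n assume mn: "N \<le> m" "N \<le> n"
      have im: "(2*d+1) / real (Suc m) \<le> (2*d+1) / r"
        unfolding r_def using mn d0 by (intro divide_left_mono) auto
      have inn: "(2*d+1) / real (Suc n) \<le> (2*d+1) / r"
        unfolding r_def using mn d0 by (intro divide_left_mono) auto
      have gen2: "2*(D + A) + 2*(D+B) - 4*D \<le> 4*K" if "A \<le> K" "B \<le> K" for A B K D :: real
        using that by (simp add: algebra_simps)
      have "(dist (x m) (x n))^2 \<le> 2 * (d^2 + (2*d+1) / real (Suc m)) + 2 * (d^2 + (2*d+1) / real (Suc n)) - 4 * d^2"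
        by (rule gen[OF par[of m n] sq[of m] sq[of n]])
      also have "\<dots> \<le> 4 * ((2*d+1) / r)" by (rule gen2[OF im inn])
      also have "\<dots> < e^2" by (rule NN)
      finally show "dist (x m) (x n) < e"
        using e by (simp add: power_less_imp_less_base)
    qed
  qed
  then obtain l where l: "x \<longlonglongrightarrow> l" by (auto simp: Cauchy_convergent_iff convergent_def)
  have lC: "l \<in> C" using closed_sequentially[OF cl xC l] .
  have lim1: "(\<lambda>n. dist u (x n)) \<longlonglongrightarrow> dist u l" by (intro tendsto_intros l)
  have lim2: "(\<lambda>n. d + inverse (real (Suc n))) \<longlonglongrightarrow> d + 0"
    by (intro tendsto_intros LIMSEQ_inverse_real_of_nat)
  have "dist u l \<le> d + 0"
    by (rule LIMSEQ_le[OF lim1 lim2]) (use xd in \<open>auto simp: inverse_eq_divide less_imp_le\<close>)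
  then have ld: "dist u l \<le> d" by simp
  show ?thesis
  proof (intro bexI[OF _ lC] ballI)
    fix y assume "y \<in> C"
    then show "dist u l \<le> dist u y" using ld dle order_trans by blast
  qed
qed

lemma proj_props:
  fixes C :: "'a::{real_inner,complete_space} set"
  assumes cl: "closed C" and cv: "convex C" and ne: "C \<noteq> {}"
  shows "metric_proj C u \<in> C" "\<And>y. y \<in> C \<Longrightarrow> dist u (metric_proj C u) \<le> dist u y"
proof -
  have "metric_proj C u \<in> C \<and> (\<forall>y\<in>C. dist u (metric_proj C u) \<le> dist u y)"
    unfolding metric_proj_def by (rule someI_ex) (use proj_exists[OF assms, of u] in blast)
  then show "metric_proj C u \<in> C" "\<And>y. y \<in> C \<Longrightarrow> dist u (metric_proj C u) \<le> dist u y" by auto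
qed

lemma proj_vi:
  fixes C :: "'a::{real_inner,complete_space} set"
  assumes cl: "closed C" and cv: "convex C" and ne: "C \<noteq> {}" and w: "w \<in> C"
  shows "inner (u - metric_proj C u) (w - metric_proj C u) \<le> 0"
proof (rule ccontr)
  define p where "p = metric_proj C u"
  have pC: "p \<in> C" and pmin: "\<And>y. y \<in> C \<Longrightarrow> dist u p \<le> dist u y"
    using proj_props[OF cl cv ne] unfolding p_def by auto
  define s where "s = inner (u - p) (w - p)"
  assume "\<not> ?thesis"
  then have s: "0 < s" unfolding s_def p_def by simp
  have wp: "w \<noteq> p" using s unfolding s_def by auto
  define r where "r = (norm (w - p))^2"
  have r: "0 < r" unfolding r_def using wp by simp
  define t where "t = min 1 (s / r)"
  have t0: "0 < t" "t \<le> 1" unfolding t_def using s r by auto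
  have tr: "t * r \<le> s" unfolding t_def using r by (simp add: min_def field_simps)
  have qC: "(1 - t) *\<^sub>R p + t *\<^sub>R w \<in> C" using convexD_alt[OF cv pC w] t0 by simp
  have "dist u p \<le> dist u ((1 - t) *\<^sub>R p + t *\<^sub>R w)" using pmin[OF qC] .
  moreover have "u - ((1 - t) *\<^sub>R p + t *\<^sub>R w) = (u - p) - t *\<^sub>R (w - p)"
    by (simp add: algebra_simps)
  ultimately have "norm (u - p) \<le> norm ((u - p) - t *\<^sub>R (w - p))" by (simp add: dist_norm)
  then have "(norm (u - p))^2 \<le> (norm ((u - p) - t *\<^sub>R (w - p)))^2"
    by (simp add: power_mono)
  also have "\<dots> = (norm (u - p))^2 - 2 * t * s + t^2 * r"
    unfolding r_def s_def power2_norm_eq_inner by (simp add: inner_simps inner_commute power2_eq_square algebra_simps)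
  finally have "2 * t * s \<le> t * (t * r)" by (simp add: power2_eq_square algebra_simps)
  then have "2 * s \<le> t * r" using t0 by simp
  with tr s show False by linarith
qed



lemma key_h:
  fixes g m a b :: "'a::real_inner"
  assumes I4: "inner (b - \<eta> *\<^sub>R m) a \<ge> 0" and eta: "\<eta> > 0"
  shows "2 * \<eta> * inner g a - (norm (a + b))^2 \<le> \<eta>^2 * hfun (norm g) (norm (g - m))"
proof -
  define \<sigma> where "\<sigma> = norm g"
  define \<delta> where "\<delta> = norm (g - m)"
  have s0: "0 \<le> \<sigma>" and d0: "0 \<le> \<delta>" unfolding \<sigma>_def \<delta>_def by simp_all
  have GM: "norm (\<eta> *\<^sub>R g - \<eta> *\<^sub>R m) = \<eta> * \<delta>"
    using eta unfolding \<delta>_def by (simp flip: scaleR_diff_right)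
  have Gn: "norm (\<eta> *\<^sub>R g) = \<eta> * \<sigma>" using eta unfolding \<sigma>_def by simp
  have Gi: "inner (\<eta> *\<^sub>R g) a = \<eta> * inner g a" by simp
  have kk: "2 * (\<eta> * inner g a) - (norm (a + b))^2 \<le> k * (\<eta> * \<delta>)^2 + (1/k - 1) * (\<eta> * \<sigma>)^2"
    if "0 < k" "k \<le> 1" for k
    using key_k[OF I4 that, of "\<eta> *\<^sub>R g"] unfolding GM Gn Gi .
  show ?thesis
  proof (cases "\<delta> \<le> \<sigma>")
    case True
    then have h: "hfun \<sigma> \<delta> = \<delta>^2" using s0 d0 by (simp add: hfun_def pos_part_def)
    show ?thesis using kk[of 1] h unfolding \<sigma>_def[symmetric] \<delta>_def[symmetric]
      by (simp add: power_mult_distrib algebra_simps)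
  next
    case False
    then have dpos: "\<sigma> < \<delta>" by simp
    have h: "hfun \<sigma> \<delta> = 2 * \<delta> * \<sigma> - \<sigma>^2" using s0 d0 dpos
      by (simp add: hfun_def pos_part_def power2_eq_square algebra_simps)
    show ?thesis
    proof (cases "\<sigma> = 0")
      case True
      then have "g = 0" unfolding \<sigma>_def by simp
      then show ?thesis using h True unfolding \<sigma>_def[symmetric] \<delta>_def[symmetric] by simp
    next
      case False
      then have sp: "0 < \<sigma>" using s0 by simp
      define k where "k = \<sigma> / \<delta>"
      have k: "0 < k" "k \<le> 1" unfolding k_def using sp dpos by auto
      have "k * (\<eta> * \<delta>)^2 + (1/k - 1) * (\<eta> * \<sigma>)^2 = \<eta>^2 * (2 * \<delta> * \<sigma> - \<sigma>^2)"
        unfolding k_def using sp dpos by (simp add: power2_eq_square field_simps)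
      then have e1: "2 * (\<eta> * inner g a) - (norm (a + b))^2 \<le> \<eta>^2 * (2 * \<delta> * \<sigma> - \<sigma>^2)"
        using kk[OF k] by simp
      then show ?thesis unfolding \<sigma>_def[symmetric] \<delta>_def[symmetric] h
        by (simp add: mult.assoc)
    qed
  qed
qed

lemma step:
  fixes C :: "'a::{real_inner,complete_space} set"
  assumes cl: "closed C" and cv: "convex C" and ne: "C \<noteq> {}" and zC: "z \<in> C" and eta: "\<eta> > 0"
    and yp: "yp = metric_proj C (y - \<eta> *\<^sub>R g)" and x: "x = metric_proj C (y - \<eta> *\<^sub>R m)"
  shows "2 * \<eta> * inner g (x - z) \<le> \<eta>^2 * hfun (norm g) (norm (g - m)) + (norm (y - z))^2 - (norm (yp - z))^2"
proof -
  have ypC: "yp \<in> C" using proj_props(1)[OF cl cv ne] yp by simp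
  have B: "inner ((y - \<eta> *\<^sub>R g) - yp) (z - yp) \<le> 0" using proj_vi[OF cl cv ne zC] yp by simp
  have V: "inner ((y - \<eta> *\<^sub>R m) - x) (yp - x) \<le> 0" using proj_vi[OF cl cv ne ypC] x by simp
  define a where "a = x - yp"
  define b where "b = y - x"
  define c where "c = y - yp"
  define w where "w = yp - z"
  have I4: "inner (b - \<eta> *\<^sub>R m) a \<ge> 0"
  proof -
    have e1: "(y - \<eta> *\<^sub>R m) - x = b - \<eta> *\<^sub>R m" and e2: "yp - x = - a" unfolding a_def b_def by simp_all
    have "inner (b - \<eta> *\<^sub>R m) (- a) \<le> 0" using V unfolding e1 e2 .
    then show ?thesis by simp
  qed
  have ab: "a + b = c" unfolding a_def b_def c_def by simp
  have K: "2 * \<eta> * inner g a - (norm c)^2 \<le> \<eta>^2 * hfun (norm g) (norm (g - m))"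
    using key_h[OF I4 eta, of g] ab by simp
  have B': "\<eta> * inner g w \<le> inner c w"
  proof -
    have e1: "(y - \<eta> *\<^sub>R g) - yp = c - \<eta> *\<^sub>R g" and e2: "z - yp = - w" unfolding c_def w_def by simp_all
    have "inner (c - \<eta> *\<^sub>R g) (- w) \<le> 0" using B unfolding e1 e2 .
    then show ?thesis by (simp add: inner_simps)
  qed
  have yz: "(norm (y - z))^2 = (norm c)^2 + 2 * inner c w + (norm w)^2"
  proof -
    have "y - z = c + w" unfolding c_def w_def by simp
    then show ?thesis unfolding power2_norm_eq_inner by (simp add: inner_simps inner_commute)
  qed
  have xz: "inner g (x - z) = inner g a + inner g w"
  proof -
    have "x - z = a + w" unfolding a_def w_def by simp
    then show ?thesis by (simp add: inner_simps)
  qed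
  have "2 * \<eta> * inner g (x - z) = 2 * \<eta> * inner g a + 2 * (\<eta> * inner g w)"
    unfolding xz by (simp add: algebra_simps)
  also have "\<dots> \<le> (\<eta>^2 * hfun (norm g) (norm (g - m)) + (norm c)^2) + 2 * inner c w"
    using K B' by simp
  also have "\<dots> = \<eta>^2 * hfun (norm g) (norm (g - m)) + (norm (y - z))^2 - (norm (yp - z))^2"
    unfolding yz w_def by simp
  finally show ?thesis .
qed

lemma sq_diff_bound:
  fixes y z z' :: "'a::real_inner"
  assumes bC: "bounded C" and "y \<in> C" "z \<in> C" "z' \<in> C"
  shows "(norm (y - z'))^2 - (norm (y - z))^2 \<le> 2 * diameter C * norm (z' - z)"
proof -
  define p where "p = norm (y - z')"
  define q where "q = norm (y - z)"
  define D where "D = norm (z' - z)"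
  have pr: "p \<le> diameter C" unfolding p_def using diameter_bounded_bound[OF bC assms(2,4)] by (simp add: dist_norm)
  have qr: "q \<le> diameter C" unfolding q_def using diameter_bounded_bound[OF bC assms(2,3)] by (simp add: dist_norm)
  have p0: "0 \<le> p" "0 \<le> q" "0 \<le> D" unfolding p_def q_def D_def by simp_all
  have pq: "p - q \<le> D"
  proof -
    have "y - z' = (y - z) + (z - z')" by simp
    then have "p \<le> q + norm (z - z')" unfolding p_def q_def by (metis norm_triangle_ineq)
    then show ?thesis unfolding D_def by (simp add: norm_minus_commute)
  qed
  have "p^2 - q^2 \<le> 2 * diameter C * D"
  proof (cases "p \<le> q")
    case True
    then have "p^2 \<le> q^2" using p0 by (simp add: power_mono)
    moreover have "0 \<le> diameter C" using qr p0 by simp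
    then have "0 \<le> 2 * diameter C * D" using p0 by simp
    ultimately show ?thesis by linarith
  next
    case False
    have "p^2 - q^2 = (p - q) * (p + q)" by (simp add: power2_eq_square algebra_simps)
    also have "\<dots> \<le> D * (2 * diameter C)"
      using False pq pr qr p0 by (intro mult_mono) auto
    finally show ?thesis by (simp add: algebra_simps)
  qed
  then show ?thesis unfolding p_def q_def D_def .
qed

lemma tele:
  fixes y z :: "nat \<Rightarrow> 'a::real_inner"
  assumes bC: "bounded C" and yC: "\<And>t. t \<ge> 1 \<Longrightarrow> y t \<in> C"
  shows "n \<ge> 1 \<Longrightarrow> (\<forall>t. 1 \<le> t \<longrightarrow> t \<le> n \<longrightarrow> z t \<in> C) \<Longrightarrow>
    (\<Sum>t=1..n. (norm (y t - z t))^2 - (norm (y (t+1) - z t))^2)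
      \<le> (norm (y 1 - z 1))^2 - (norm (y (n+1) - z n))^2 + 2 * diameter C * (\<Sum>t=2..n. norm (z t - z (t - 1)))"
proof (induction n rule: nat_induct_at_least)
  case base
  then show ?case by simp
next
  case (Suc n)
  have zC: "\<forall>t. 1 \<le> t \<longrightarrow> t \<le> n \<longrightarrow> z t \<in> C" using Suc.prems by auto
  have IH: "(\<Sum>t=1..n. (norm (y t - z t))^2 - (norm (y (t+1) - z t))^2)
      \<le> (norm (y 1 - z 1))^2 - (norm (y (n+1) - z n))^2 + 2 * diameter C * (\<Sum>t=2..n. norm (z t - z (t - 1)))"
    using Suc.IH[OF zC] .
  have s1: "(\<Sum>t=1..Suc n. (norm (y t - z t))^2 - (norm (y (t+1) - z t))^2)
     = (\<Sum>t=1..n. (norm (y t - z t))^2 - (norm (y (t+1) - z t))^2)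
       + ((norm (y (Suc n) - z (Suc n)))^2 - (norm (y (Suc n + 1) - z (Suc n)))^2)"
    by (simp add: sum.cl_ivl_Suc)
  have s2: "(\<Sum>t=2..Suc n. norm (z t - z (t - 1))) = (\<Sum>t=2..n. norm (z t - z (t - 1))) + norm (z (Suc n) - z n)"
    using Suc.hyps by (simp add: sum.cl_ivl_Suc)
  have d: "(norm (y (Suc n) - z (Suc n)))^2 - (norm (y (Suc n) - z n))^2 \<le> 2 * diameter C * norm (z (Suc n) - z n)"
    using sq_diff_bound[OF bC yC[of "Suc n"]] Suc.prems Suc.hyps by auto
  have e: "y (n+1) = y (Suc n)" by simp
  show ?case unfolding s1 s2 using IH d unfolding e by (simp add: algebra_simps)
qed



lemma div_step: "0 < (\<eta>::real) \<Longrightarrow> 2*\<eta>*I \<le> \<eta>^2*h + R \<Longrightarrow> I \<le> \<eta>/2*h + R/(2*\<eta>)"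
  by (simp add: field_simps power2_eq_square)

theorem corollary1:
  fixes C :: "'a::{real_inner, complete_space} set"
    and D :: "nat \<Rightarrow> 'a set"
    and \<phi> :: "nat \<Rightarrow> 'a \<Rightarrow> real"
    and \<eta> :: real
    and xt x xs xh z :: "nat \<Rightarrow> 'a"
    and T :: nat
  assumes C_ne: "C \<noteq> {}" and C_closed: "closed C" and C_convex: "convex C"
    and C_bounded: "bounded C"
    and D_convex: "\<And>t. t \<ge> 1 \<Longrightarrow> convex (D t)"
    and phi_convex: "\<And>t. t \<ge> 1 \<Longrightarrow> convex_on (D t) (\<phi> t)"
    and C_dom: "\<And>t y. t \<ge> 1 \<Longrightarrow> y \<in> C \<Longrightarrow> subdiff (D t) (\<phi> t) y \<noteq> {}"
    and eta_pos: "\<eta> > 0"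
    and xt1: "xt 1 \<in> C"
    and upd_xt: "\<And>t. t \<ge> 1 \<Longrightarrow> xt (t + 1) = metric_proj C (xt t - \<eta> *\<^sub>R xs t)"
    and sub: "\<And>t. t \<ge> 1 \<Longrightarrow> xs t \<in> subdiff (D t) (\<phi> t) (x t)"
    and upd_x: "\<And>t. t \<ge> 1 \<Longrightarrow> x t = metric_proj C (xt t - \<eta> *\<^sub>R xh t)"
    and T_ge: "T \<ge> 1"
    and zC: "\<And>t. 1 \<le> t \<Longrightarrow> t \<le> T \<Longrightarrow> z t \<in> C"
  shows "(\<Sum>t=1..T. \<phi> t (x t)) - (\<Sum>t=1..T. \<phi> t (z t))
     \<le> (diameter C)^2 / (2 * \<eta>) + (diameter C / \<eta>) * (\<Sum>t=2..T. norm (z t - z (t - 1)))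
        + (\<eta> / 2) * (\<Sum>t=1..T. hfun (norm (xs t)) (norm (xs t - xh t)))"
proof -
  define \<rho> where "\<rho> = diameter C"
  define h where "h t = hfun (norm (xs t)) (norm (xs t - xh t))" for t
  define R where "R t = (norm (xt t - z t))^2 - (norm (xt (t+1) - z t))^2" for t
  define V where "V = (\<Sum>t=2..T. norm (z t - z (t - 1)))"
  have xtC: "xt t \<in> C" if "t \<ge> 1" for t
    using that
  proof (induction t rule: nat_induct_at_least)
    case base then show ?case using xt1 .
  next
    case (Suc n)
    then show ?case using upd_xt[of n] proj_props(1)[OF C_closed C_convex C_ne] by simp
  qed
  have per: "\<phi> t (x t) - \<phi> t (z t) \<le> \<eta>/2 * h t + R t / (2*\<eta>)" if t: "1 \<le> t" "t \<le> T" for t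
  proof -
    have ztC: "z t \<in> C" using zC t by simp
    have zD: "z t \<in> D t" using C_dom[OF t(1) ztC] unfolding subdiff_def by auto
    have "\<phi> t (x t) + inner (xs t) (z t - x t) \<le> \<phi> t (z t)"
      using sub[OF t(1)] zD unfolding subdiff_def by auto
    moreover have "inner (xs t) (z t - x t) = - inner (xs t) (x t - z t)"
      by (simp add: inner_diff_right)
    ultimately have sg: "\<phi> t (x t) - \<phi> t (z t) \<le> inner (xs t) (x t - z t)" by simp
    have "2 * \<eta> * inner (xs t) (x t - z t) \<le> \<eta>^2 * h t + R t"
      using step[OF C_closed C_convex C_ne ztC eta_pos upd_xt[OF t(1)] upd_x[OF t(1)]]
      unfolding h_def R_def by simp
    then have "inner (xs t) (x t - z t) \<le> \<eta>/2 * h t + R t / (2*\<eta>)"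
      by (rule div_step[OF eta_pos])
    with sg show ?thesis by simp
  qed
  have "(\<Sum>t=1..T. \<phi> t (x t)) - (\<Sum>t=1..T. \<phi> t (z t)) = (\<Sum>t=1..T. \<phi> t (x t) - \<phi> t (z t))"
    by (simp add: sum_subtractf)
  also have "\<dots> \<le> (\<Sum>t=1..T. \<eta>/2 * h t + R t / (2*\<eta>))"
    by (rule sum_mono) (use per in auto)
  also have "\<dots> = \<eta>/2 * (\<Sum>t=1..T. h t) + (\<Sum>t=1..T. R t) / (2*\<eta>)"
    by (simp add: sum.distrib sum_distrib_left sum_divide_distrib)
  finally have A: "(\<Sum>t=1..T. \<phi> t (x t)) - (\<Sum>t=1..T. \<phi> t (z t)) \<le> \<eta>/2 * (\<Sum>t=1..T. h t) + (\<Sum>t=1..T. R t) / (2*\<eta>)" .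
  have "(\<Sum>t=1..T. R t) \<le> (norm (xt 1 - z 1))^2 - (norm (xt (T+1) - z T))^2 + 2 * \<rho> * V"
    unfolding R_def V_def \<rho>_def using tele[where y=xt and z=z and C=C, OF C_bounded xtC T_ge] zC by auto
  also have "\<dots> \<le> \<rho>^2 + 2 * \<rho> * V"
  proof -
    have "norm (xt 1 - z 1) \<le> \<rho>" unfolding \<rho>_def
      using diameter_bounded_bound[OF C_bounded xt1 zC[of 1]] T_ge by (simp add: dist_norm)
    then have "(norm (xt 1 - z 1))^2 \<le> \<rho>^2" by (simp add: power_mono)
    then show ?thesis using zero_le_power2[of "norm (xt (T+1) - z T)"] by linarith
  qed
  finally have B: "(\<Sum>t=1..T. R t) \<le> \<rho>^2 + 2 * \<rho> * V" .
  have "(\<Sum>t=1..T. R t) / (2*\<eta>) \<le> (\<rho>^2 + 2 * \<rho> * V) / (2*\<eta>)"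
    using B eta_pos by (simp add: divide_right_mono)
  also have "\<dots> = \<rho>^2 / (2*\<eta>) + (\<rho> / \<eta>) * V" using eta_pos by (simp add: field_simps)
  finally have B2: "(\<Sum>t=1..T. R t) / (2*\<eta>) \<le> \<rho>^2 / (2*\<eta>) + (\<rho> / \<eta>) * V" .
  show ?thesis using A B2 unfolding \<rho>_def V_def h_def by simp
qed


end
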